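(* Let $\mathcal{Z}\subset\mathbb{R}^n$ be closed and convex, and let $f:\mathcal{Z}\to\mathbb{R}^n$ be such that $-f$ is $\beta$-strongly monotone and globally $L$-Lipschitz. Consider, for $K>0$, the anti-windup approximation $$\dot z=F_K(z):=f(P_\mathcal{Z}(z))-\tfrac1K\big(z-P_\mathcal{Z}(z)\big),\qquad z\in\mathbb{R}^n.$$ Then for all $0<K<4\beta/L^2$, every trajectory of this system converges to an equilibrium point $z^\star$, which is unique, and $P_\mathcal{Z}(z^\star)$ is the unique equilibrium of the projected dynamical system $\dot z=\Pi_\mathcal{Z}[f](z)$, $z\in\mathcal{Z}$.
   Context: $P_\mathcal{Z}$ is the Euclidean projection onto $\mathcal{Z}$. A map $F$ is $\beta$-strongly monotone on $\mathcal{C}$ if $\langle v-v',x-x'\rangle\ge\beta\|x-x'\|^2$ for all $x,x'\in\mathcal{C}$, $v\in F(x)$, $v'\in F(x')$. $T_x\mathcal{Z}$ is the tangent cone of $\mathcal{Z}$ at $x$, and $\Pi_\mathcal{Z}[f](x):=\arg\min_{v\in T_x\mathcal{Z}}\|v-f(x)\|$ for $x\in\mathcal{Z}$. An equilibrium of the projected system is a point $\bar z\in\mathcal{Z}$ such that the constant trajectory at $\bar z$ is a (Carathéodory) solution, i.e., $\Pi_\mathcal{Z}[f](\bar z)=0$. *)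

theory Defs
  imports "HOL-Analysis.Analysis"
begin

text \<open>Euclidean projection onto Z: the library's closest_point Z.\<close>

definition strongly_monotone_on :: "real \<Rightarrow> 'a::real_inner set \<Rightarrow> ('a \<Rightarrow> 'a) \<Rightarrow> bool" where
  "strongly_monotone_on \<beta> C F \<longleftrightarrow>
     (\<forall>x\<in>C. \<forall>x'\<in>C. inner (F x - F x') (x - x') \<ge> \<beta> * (norm (x - x'))\<^sup>2)"

definition tangent_cone :: "'a::real_normed_vector set \<Rightarrow> 'a \<Rightarrow> 'a set" where
  "tangent_cone Z x = closure {c *\<^sub>R (y - x) | c y. c > 0 \<and> y \<in> Z}"

definition proj_field :: "'a::euclidean_space set \<Rightarrow> ('a \<Rightarrow> 'a) \<Rightarrow> 'a \<Rightarrow> 'a" where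
  "proj_field Z f x = closest_point (tangent_cone Z x) (f x)"

definition proj_equilibrium :: "'a::euclidean_space set \<Rightarrow> ('a \<Rightarrow> 'a) \<Rightarrow> 'a \<Rightarrow> bool" where
  "proj_equilibrium Z f z \<longleftrightarrow> z \<in> Z \<and> proj_field Z f z = 0"

definition antiwindup_field :: "'a::euclidean_space set \<Rightarrow> ('a \<Rightarrow> 'a) \<Rightarrow> real \<Rightarrow> 'a \<Rightarrow> 'a" where
  "antiwindup_field Z f K z = f (closest_point Z z) - (1 / K) *\<^sub>R (z - closest_point Z z)"

definition is_trajectory :: "('a::real_normed_vector \<Rightarrow> 'a) \<Rightarrow> (real \<Rightarrow> 'a) \<Rightarrow> bool" where
  "is_trajectory F x \<longleftrightarrow> (\<forall>t\<ge>0. (x has_vector_derivative F (x t)) (at t within {0..}))"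

end

theory Submission
  imports Defs "HOL-Real_Asymp.Real_Asymp"
begin


lemma tc_eq:
  assumes "z \<in> Z"
  shows "{c *\<^sub>R (y - z) | c y. c > 0 \<and> y \<in> Z} = cone hull ((\<lambda>y. y - z) ` Z)"
proof
  show "{c *\<^sub>R (y - z) | c y. c > 0 \<and> y \<in> Z} \<subseteq> cone hull ((\<lambda>y. y - z) ` Z)"
    unfolding cone_hull_expl by force
  show "cone hull ((\<lambda>y. y - z) ` Z) \<subseteq> {c *\<^sub>R (y - z) | c y. c > 0 \<and> y \<in> Z}"
  proof
    fix v assume "v \<in> cone hull ((\<lambda>y. y - z) ` Z)"
    then obtain c y where v: "v = c *\<^sub>R (y - z)" "c \<ge> 0" "y \<in> Z"
      unfolding cone_hull_expl by auto
    show "v \<in> {c *\<^sub>R (y - z) | c y. c > 0 \<and> y \<in> Z}"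
    proof (cases "c = 0")
      case True
      show ?thesis
        apply (rule CollectI) apply (rule exI[where x="1::real"]) apply (rule exI[where x=z])
        using True v assms by simp
    next
      case False
      then show ?thesis using v by force
    qed
  qed
qed

lemma tc_props:
  assumes "convex Z" "z \<in> Z"
  shows "convex (tangent_cone Z z)" "closed (tangent_cone Z z)"
    "\<And>y. y \<in> Z \<Longrightarrow> y - z \<in> tangent_cone Z z" "0 \<in> tangent_cone Z z"
proof -
  show "convex (tangent_cone Z z)"
    unfolding tangent_cone_def tc_eq[OF assms(2)]
    by (intro convex_closure convex_cone_hull convex_translation_subtract assms)
  show "closed (tangent_cone Z z)" unfolding tangent_cone_def by simp
  show *: "y - z \<in> tangent_cone Z z" if "y \<in> Z" for y
  proof -
    have "y - z \<in> cone hull ((\<lambda>y. y - z) ` Z)"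
      using that by (intro hull_inc) simp
    then show ?thesis unfolding tangent_cone_def tc_eq[OF assms(2)] using closure_subset by blast
  qed
  show "0 \<in> tangent_cone Z z" using *[OF assms(2)] by simp
qed

lemma tc_polar:
  assumes "\<And>y. y \<in> Z \<Longrightarrow> inner a (y - z) \<le> 0" and "v \<in> tangent_cone Z z"
  shows "inner a v \<le> 0"
proof -
  have "{c *\<^sub>R (y - z) | c y. c > 0 \<and> y \<in> Z} \<subseteq> {v. inner a v \<le> 0}"
  proof
    fix v assume "v \<in> {c *\<^sub>R (y - z) | c y. c > 0 \<and> y \<in> Z}"
    then obtain c y where "v = c *\<^sub>R (y - z)" "c > 0" "y \<in> Z" by auto
    then show "v \<in> {v. inner a v \<le> 0}"
      using assms(1)[of y] by (simp add: mult_nonneg_nonpos)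
  qed
  then have "tangent_cone Z z \<subseteq> {v. inner a v \<le> 0}"
    unfolding tangent_cone_def by (intro closure_minimal) (auto simp: closed_halfspace_le)
  then show ?thesis using assms(2) by auto
qed

lemma proj_eq_iff:
  fixes Z :: "'a::euclidean_space set"
  assumes "convex Z" "z \<in> Z"
  shows "proj_field Z f z = 0 \<longleftrightarrow> (\<forall>y\<in>Z. inner (f z) (y - z) \<le> 0)"
proof
  assume h: "proj_field Z f z = 0"
  show "\<forall>y\<in>Z. inner (f z) (y - z) \<le> 0"
  proof
    fix y assume "y \<in> Z"
    from closest_point_dot[OF tc_props(1,2)[OF assms] tc_props(3)[OF assms this], of "f z"] h
    show "inner (f z) (y - z) \<le> 0" unfolding proj_field_def by simp
  qed
next
  assume h: "\<forall>y\<in>Z. inner (f z) (y - z) \<le> 0"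
  have "0 = closest_point (tangent_cone Z z) (f z)"
  proof (rule closest_point_unique[OF tc_props(1,2)[OF assms] tc_props(4)[OF assms]], rule ballI)
    fix v assume "v \<in> tangent_cone Z z"
    then have i: "inner (f z) v \<le> 0" using tc_polar[of Z "f z" z v] h by auto
    have "(norm (f z - v))\<^sup>2 = (norm (f z))\<^sup>2 - 2 * inner (f z) v + (norm v)\<^sup>2"
      by (simp add: power2_norm_eq_inner inner_diff inner_commute)
    then have "(norm (f z))\<^sup>2 \<le> (norm (f z - v))\<^sup>2" proof -
      have "0 \<le> (norm v)\<^sup>2" by simp
      then show ?thesis using i \<open>(norm (f z - v))\<^sup>2 = _\<close> by linarith
    qed
    then show "dist (f z) 0 \<le> dist (f z) v" by (simp add: dist_norm)
  qed
  then show "proj_field Z f z = 0" unfolding proj_field_def by simp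
qed



lemma dinner:
  fixes x :: "real \<Rightarrow> 'a::euclidean_space"
  assumes "(x has_vector_derivative v) (at t)"
  shows "((\<lambda>s. inner (x s - zs) (x s - zs)) has_real_derivative 2 * inner v (x t - zs)) (at t)"
proof -
  have d: "(x has_derivative (\<lambda>h. h *\<^sub>R v)) (at t)" using assms by (simp add: has_vector_derivative_def)
  show ?thesis unfolding has_field_derivative_def
    by (rule derivative_eq_intros d refl | simp)+ (auto simp: inner_commute algebra_simps)
qed

lemma traj_conv:
  fixes F :: "'a::euclidean_space \<Rightarrow> 'a"
  assumes F0: "F zs = 0"
    and mono: "\<And>z z'. inner (F z - F z') (z - z') \<le> - \<mu> * (norm (z - z'))\<^sup>2"
    and mu: "\<mu> > 0" and tr: "is_trajectory F x"
  shows "(x \<longlongrightarrow> zs) at_top"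
proof -
  define V where "V t = inner (x t - zs) (x t - zs)" for t
  define W where "W t = exp (2*\<mu>*t) * V t" for t
  have der: "(x has_vector_derivative F (x t)) (at t)" if "t > 0" for t
  proof -
    have "(x has_vector_derivative F (x t)) (at t within {0..})"
      using tr that unfolding is_trajectory_def by auto
    moreover have "at t within {0..} = at t"
      using that by (intro at_within_interior) simp
    ultimately show ?thesis by simp
  qed
  have cont: "continuous_on {0..} x"
    unfolding continuous_on_eq_continuous_within using tr unfolding is_trajectory_def
    by (auto intro: has_vector_derivative_continuous)
  have Wdec: "W T \<le> W 0" if "T \<ge> 0" for T
  proof (rule DERIV_nonpos_imp_decreasing_open[OF that])
    fix t :: real assume t: "0 < t" "t < T"
    have dV: "(V has_real_derivative 2 * inner (F (x t)) (x t - zs)) (at t)"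
      unfolding V_def by (rule dinner[OF der[OF t(1)]])
    have dE: "((\<lambda>t. exp (2*\<mu>*t)) has_real_derivative exp (2*\<mu>*t) * (2*\<mu>)) (at t)"
      by (rule derivative_eq_intros refl | simp)+
    have dW: "(W has_real_derivative exp (2*\<mu>*t) * (2*\<mu>) * V t + exp (2*\<mu>*t) * (2 * inner (F (x t)) (x t - zs))) (at t)"
      unfolding W_def by (rule DERIV_cong[OF DERIV_mult[OF dE dV]]) (simp add: algebra_simps)
    have "inner (F (x t)) (x t - zs) = inner (F (x t) - F zs) (x t - zs)" using F0 by simp
    also have "\<dots> \<le> - \<mu> * (norm (x t - zs))\<^sup>2" by (rule mono)
    also have "\<dots> = - \<mu> * V t" by (simp add: V_def power2_norm_eq_inner)
    finally have "2*\<mu> * V t + 2 * inner (F (x t)) (x t - zs) \<le> 0" by simp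
    then have "exp (2*\<mu>*t) * (2*\<mu> * V t + 2 * inner (F (x t)) (x t - zs)) \<le> 0"
      by (simp add: mult_nonneg_nonpos)
    then show "\<exists>y. (W has_real_derivative y) (at t) \<and> y \<le> 0"
      using dW by (intro exI[of _ "exp (2*\<mu>*t) * (2*\<mu>) * V t + exp (2*\<mu>*t) * (2 * inner (F (x t)) (x t - zs))"]) (simp add: algebra_simps)
  next
    have "continuous_on {0..T} x" using cont by (rule continuous_on_subset) auto
    then show "continuous_on {0..T} W" unfolding W_def V_def by (intro continuous_intros)
  qed
  have bound: "V T \<le> V 0 * exp (- (2*\<mu>) * T)" if "T \<ge> 0" for T
  proof -
    have "exp (2*\<mu>*T) * V T \<le> V 0" using Wdec[OF that] by (simp add: W_def)
    then have "V T \<le> V 0 / exp (2*\<mu>*T)" by (simp add: field_simps)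
    then show ?thesis by (simp add: exp_minus field_simps)
  qed
  have lim0: "((\<lambda>T. V 0 * exp (- (2*\<mu>) * T)) \<longlongrightarrow> 0) at_top"
    using mu by real_asymp
  have "(V \<longlongrightarrow> 0) at_top"
  proof (rule tendsto_sandwich[OF _ _ tendsto_const lim0])
    show "\<forall>\<^sub>F n in at_top. 0 \<le> V n" by (simp add: V_def)
    show "\<forall>\<^sub>F n in at_top. V n \<le> V 0 * exp (- (2*\<mu>) * n)"
      using eventually_ge_at_top[of "0::real"] by (rule eventually_mono) (rule bound)
  qed
  then have "((\<lambda>t. sqrt (V t)) \<longlongrightarrow> 0) at_top" using tendsto_real_sqrt by fastforce
  moreover have "sqrt (V t) = norm (x t - zs)" for t by (simp add: V_def norm_eq_sqrt_inner)
  ultimately have "((\<lambda>t. norm (x t - zs)) \<longlongrightarrow> 0) at_top" by simp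
  then have "((\<lambda>t. x t - zs) \<longlongrightarrow> 0) at_top" by (simp add: tendsto_norm_zero_iff)
  then show ?thesis by (simp add: LIM_zero_iff)
qed


lemma quad_pos:
  fixes \<beta> L K :: real
  assumes "\<beta> > 0" "L > 0" "K > 0" "K < 4*\<beta>/L\<^sup>2"
  shows "\<exists>c>0. \<forall>a b::real. \<beta>*a\<^sup>2 - L*a*b + b\<^sup>2/K \<ge> c*(a\<^sup>2+b\<^sup>2)"
proof -
  define K' where "K' = (K + 4*\<beta>/L\<^sup>2)/2"
  have KK: "K < K'" "K' < 4*\<beta>/L\<^sup>2" using assms unfolding K'_def by auto
  have K'pos: "K' > 0" using KK assms by linarith
  have "L\<^sup>2 * K' < 4*\<beta>" using KK(2) assms(2) by (simp add: field_simps)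
  then have c1: "\<beta> - L\<^sup>2*K'/4 > 0" by simp
  have c2: "1/K - 1/K' > 0" using KK assms(3) by (simp add: field_simps)
  define c where "c = min (\<beta> - L\<^sup>2*K'/4) (1/K - 1/K')"
  have cpos: "c > 0" using c1 c2 by (simp add: c_def)
  have "\<beta>*a\<^sup>2 - L*a*b + b\<^sup>2/K \<ge> c*(a\<^sup>2+b\<^sup>2)" for a b :: real
  proof -
    have "0 \<le> (L*K'*a/2 - b)\<^sup>2" by simp
    also have "\<dots> = L\<^sup>2*K'\<^sup>2*a\<^sup>2/4 - L*K'*a*b + b\<^sup>2" by (simp add: power2_eq_square algebra_simps)
    finally have "L*a*b*K' \<le> (L\<^sup>2*K'/4*a\<^sup>2 + b\<^sup>2/K') * K'" using K'pos
      by (simp add: power2_eq_square algebra_simps)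
    then have lab: "L*a*b \<le> L\<^sup>2*K'/4*a\<^sup>2 + b\<^sup>2/K'" using K'pos by simp
    have "c*(a\<^sup>2+b\<^sup>2) = c*a\<^sup>2 + c*b\<^sup>2" by (simp add: algebra_simps)
    also have "\<dots> \<le> (\<beta> - L\<^sup>2*K'/4)*a\<^sup>2 + (1/K - 1/K')*b\<^sup>2"
      by (intro add_mono mult_right_mono) (auto simp: c_def)
    also have "\<dots> \<le> \<beta>*a\<^sup>2 - L*a*b + b\<^sup>2/K" using lab by (simp add: algebra_simps)
    finally show ?thesis .
  qed
  then show ?thesis using cpos by blast
qed



lemma F_props:
  fixes Z :: "'a::euclidean_space set" and f :: "'a \<Rightarrow> 'a"
  assumes Z: "closed Z" "convex Z" "Z \<noteq> {}"
    and sm: "strongly_monotone_on \<beta> Z (\<lambda>x. - f x)"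
    and lip: "L-lipschitz_on Z f" and K: "K > 0"
    and cpos: "c > 0" and quad: "\<forall>a b::real. \<beta>*a\<^sup>2 - L*a*b + b\<^sup>2/K \<ge> c*(a\<^sup>2+b\<^sup>2)"
  shows "inner (antiwindup_field Z f K z - antiwindup_field Z f K z') (z - z') \<le> -(c/2) * (norm (z - z'))\<^sup>2"
    and "norm (antiwindup_field Z f K z - antiwindup_field Z f K z') \<le> (L + 2/K) * norm (z - z')"
proof -
  define p where "p = closest_point Z z"
  define p' where "p' = closest_point Z z'"
  define r where "r = z - p"
  define r' where "r' = z' - p'"
  define a where "a = norm (p - p')"
  define b where "b = norm (r - r')"
  have pZ: "p \<in> Z" "p' \<in> Z" unfolding p_def p'_def using Z by (auto intro: closest_point_in_set)
  have Lnn: "L \<ge> 0" using lip by (simp add: lipschitz_on_def)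
  have FF: "antiwindup_field Z f K z - antiwindup_field Z f K z' = (f p - f p') - (1/K) *\<^sub>R (r - r')"
    unfolding antiwindup_field_def p_def p'_def r_def r'_def by (simp add: algebra_simps)
  have zz: "z - z' = (p - p') + (r - r')" unfolding r_def r'_def by simp
  have h1: "inner (f p - f p') (p - p') \<le> - \<beta> * a\<^sup>2"
  proof -
    have "inner (- f p - - f p') (p - p') \<ge> \<beta> * (norm (p - p'))\<^sup>2"
      using sm pZ unfolding strongly_monotone_on_def by blast
    then show ?thesis unfolding a_def by (simp add: inner_diff_left)
  qed
  have fl: "norm (f p - f p') \<le> L * a"
    using lip pZ unfolding lipschitz_on_def a_def by (simp add: dist_norm)
  have h2: "inner (f p - f p') (r - r') \<le> L * a * b"
  proof -
    have "inner (f p - f p') (r - r') \<le> norm (f p - f p') * b"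
      unfolding b_def by (rule norm_cauchy_schwarz)
    also have "\<dots> \<le> L * a * b" using fl unfolding b_def by (simp add: mult_right_mono)
    finally show ?thesis .
  qed
  have h3: "inner (r - r') (p - p') \<ge> 0"
  proof -
    have "inner (z - p) (p' - p) \<le> 0" unfolding p_def using Z pZ(2) by (intro closest_point_dot) auto
    moreover have "inner (z' - p') (p - p') \<le> 0" unfolding p'_def using Z pZ(1) by (intro closest_point_dot) auto
    ultimately show ?thesis unfolding r_def r'_def
      by (simp add: inner_diff_left inner_diff_right inner_commute algebra_simps)
  qed
  have h4: "inner (r - r') (r - r') = b\<^sup>2" unfolding b_def by (simp add: power2_norm_eq_inner)
  have "inner (antiwindup_field Z f K z - antiwindup_field Z f K z') (z - z')
      = inner (f p - f p') (p - p') + inner (f p - f p') (r - r')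
        - (1/K) * inner (r - r') (p - p') - (1/K) * inner (r - r') (r - r')"
    unfolding FF zz by (simp add: inner_add_right inner_diff_left algebra_simps)
  also have "\<dots> \<le> - \<beta> * a\<^sup>2 + L * a * b - 0 - (1/K) * b\<^sup>2"
    using h1 h2 h3 h4 K by (intro diff_mono add_mono) auto
  also have "\<dots> \<le> - c * (a\<^sup>2 + b\<^sup>2)" using quad[rule_format, of a b] by simp
  also have "\<dots> \<le> -(c/2) * (norm (z - z'))\<^sup>2"
  proof -
    have "norm (z - z') \<le> a + b" unfolding zz a_def b_def by (rule norm_triangle_ineq)
    then have "(norm (z - z'))\<^sup>2 \<le> (a + b)\<^sup>2" by (simp add: power_mono)
    also have "\<dots> \<le> 2 * (a\<^sup>2 + b\<^sup>2)" using sum_squares_ge_zero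
      by (smt (verit) power2_sum zero_le_power2 power2_diff)
    finally have "(norm (z - z'))\<^sup>2 \<le> 2 * (a\<^sup>2 + b\<^sup>2)" .
    then have "(c/2) * (norm (z - z'))\<^sup>2 \<le> (c/2) * (2 * (a\<^sup>2 + b\<^sup>2))"
      by (rule mult_left_mono) (use cpos in auto)
    then show ?thesis by (simp add: algebra_simps)
  qed
  finally show "inner (antiwindup_field Z f K z - antiwindup_field Z f K z') (z - z') \<le> -(c/2) * (norm (z - z'))\<^sup>2" .
  have aa: "a \<le> norm (z - z')" unfolding a_def p_def p'_def using closest_point_lipschitz[OF Z(2,1,3)]
    by (simp add: dist_norm)
  have bb: "b \<le> 2 * norm (z - z')"
  proof -
    have "r - r' = (z - z') - (p - p')" unfolding r_def r'_def by simp
    then have "b \<le> norm (z - z') + a" unfolding b_def a_def by (metis norm_triangle_ineq4)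
    then show ?thesis using aa by simp
  qed
  have "norm (antiwindup_field Z f K z - antiwindup_field Z f K z') \<le> norm (f p - f p') + norm ((1/K) *\<^sub>R (r - r'))"
    unfolding FF by (rule norm_triangle_ineq4)
  also have "\<dots> = norm (f p - f p') + (1/K) * b" using K by (simp add: b_def)
  also have "\<dots> \<le> L * norm (z - z') + (1/K) * (2 * norm (z - z'))"
    using fl aa bb K Lnn by (intro add_mono order.trans[OF fl] mult_left_mono) auto
  also have "\<dots> = (L + 2/K) * norm (z - z')" by (simp add: algebra_simps)
  finally show "norm (antiwindup_field Z f K z - antiwindup_field Z f K z') \<le> (L + 2/K) * norm (z - z')" .
qed


lemma norm_add_scale_sq:
  fixes u v :: "'a::real_inner"
  shows "(norm (u + h *\<^sub>R v))\<^sup>2 = (norm u)\<^sup>2 + 2 * h * inner v u + h\<^sup>2 * (norm v)\<^sup>2"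
  unfolding power2_norm_eq_inner
  by (simp add: inner_add_left inner_add_right inner_commute power2_eq_square algebra_simps)

lemma vi_unique:
  fixes Z :: "'a::euclidean_space set"
  assumes sm: "strongly_monotone_on \<beta> Z (\<lambda>x. - f x)" and b: "\<beta> > 0"
    and z: "z \<in> Z" "\<forall>y\<in>Z. inner (f z) (y - z) \<le> 0"
    and w: "w \<in> Z" "\<forall>y\<in>Z. inner (f w) (y - w) \<le> 0"
  shows "z = w"
proof -
  have "inner (- f z - - f w) (z - w) \<ge> \<beta> * (norm (z - w))\<^sup>2"
    using sm z w unfolding strongly_monotone_on_def by blast
  moreover have "inner (f z) (w - z) \<le> 0" "inner (f w) (z - w) \<le> 0" using z w by auto
  moreover have "inner (- f z - - f w) (z - w) = inner (f z) (w - z) + inner (f w) (z - w)"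
    by (simp add: inner_diff_left inner_diff_right algebra_simps)
  ultimately have "\<beta> * (norm (z - w))\<^sup>2 \<le> 0" by linarith
  then have "(norm (z - w))\<^sup>2 \<le> 0" using b by (simp add: mult_le_0_iff)
  then show ?thesis by simp
qed

theorem theorem6p3:
  fixes Z :: "'a::euclidean_space set" and f :: "'a \<Rightarrow> 'a"
    and \<beta> L K :: real
  assumes "closed Z" and "convex Z" and "Z \<noteq> {}"
    and "\<beta> > 0" and "L > 0"
    and "strongly_monotone_on \<beta> Z (\<lambda>x. - f x)"
    and "L-lipschitz_on Z f"
    and "0 < K" and "K < 4 * \<beta> / L\<^sup>2"
  shows "\<exists>zs. antiwindup_field Z f K zs = 0
           \<and> (\<forall>z. antiwindup_field Z f K z = 0 \<longrightarrow> z = zs)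
           \<and> (\<forall>x. is_trajectory (antiwindup_field Z f K) x \<longrightarrow> (x \<longlongrightarrow> zs) at_top)
           \<and> proj_equilibrium Z f (closest_point Z zs)
           \<and> (\<forall>z. proj_equilibrium Z f z \<longrightarrow> z = closest_point Z zs)"
proof -
  obtain c where cpos: "c > 0" and quad: "\<forall>a b::real. \<beta>*a\<^sup>2 - L*a*b + b\<^sup>2/K \<ge> c*(a\<^sup>2+b\<^sup>2)"
    using quad_pos[of \<beta> L K] assms by auto
  define F where "F = antiwindup_field Z f K"
  define \<mu> where "\<mu> = c/2"
  define M where "M = L + 2/K"
  have mu: "\<mu> > 0" using cpos by (simp add: \<mu>_def)
  have Mpos: "M > 0" using assms by (simp add: M_def add_pos_pos)
  have mono: "inner (F z - F z') (z - z') \<le> - \<mu> * (norm (z - z'))\<^sup>2" for z z'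
    unfolding F_def \<mu>_def using F_props(1)[OF assms(1-3,6,7) _ cpos quad] assms(8) by simp
  have lipF: "norm (F z - F z') \<le> M * norm (z - z')" for z z'
    unfolding F_def M_def using F_props(2)[OF assms(1-3,6,7) _ cpos quad] assms(8) by simp
  define h where "h = \<mu> / M\<^sup>2"
  have hpos: "h > 0" using mu Mpos by (simp add: h_def)
  define G where "G z = z + h *\<^sub>R F z" for z
  define q where "q = sqrt (max 0 (1 - \<mu>\<^sup>2/M\<^sup>2))"
  have q: "0 \<le> q" "q < 1"
  proof -
    show "0 \<le> q" by (simp add: q_def)
    have "\<mu>\<^sup>2/M\<^sup>2 > 0" using mu Mpos by simp
    then have "max 0 (1 - \<mu>\<^sup>2/M\<^sup>2) < 1" by simp
    then show "q < 1" by (simp add: q_def)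
  qed
  have contr: "\<forall>x y. dist (G x) (G y) \<le> q * dist x y"
  proof (intro allI)
    fix z z' :: 'a
    define d where "d = norm (z - z')"
    have "G z - G z' = (z - z') + h *\<^sub>R (F z - F z')" by (simp add: G_def algebra_simps)
    then have "(norm (G z - G z'))\<^sup>2 = d\<^sup>2 + 2 * h * inner (F z - F z') (z - z') + h\<^sup>2 * (norm (F z - F z'))\<^sup>2"
      unfolding d_def by (simp only: norm_add_scale_sq)
    also have "\<dots> \<le> d\<^sup>2 + 2 * h * (- \<mu> * d\<^sup>2) + h\<^sup>2 * (M * d)\<^sup>2"
    proof (intro add_mono order.refl mult_left_mono)
      show "inner (F z - F z') (z - z') \<le> - \<mu> * d\<^sup>2" unfolding d_def by (rule mono)
      show "(norm (F z - F z'))\<^sup>2 \<le> (M * d)\<^sup>2" unfolding d_def by (rule power_mono[OF lipF]) simp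
    qed (use hpos in auto)
    also have "\<dots> = (1 - \<mu>\<^sup>2/M\<^sup>2) * d\<^sup>2" using Mpos unfolding h_def
      by (simp add: field_simps power2_eq_square)
    also have "\<dots> \<le> (q * d)\<^sup>2" unfolding q_def power_mult_distrib by (intro mult_right_mono) auto
    finally have "norm (G z - G z') \<le> q * d"
      by (rule power2_le_imp_le) (use q in \<open>simp add: d_def\<close>)
    then show "dist (G z) (G z') \<le> q * dist z z'" by (simp add: dist_norm d_def)
  qed
  obtain zs where "G zs = zs" using banach_fix_type[OF q contr] by blast
  then have F0: "F zs = 0" using hpos by (simp add: G_def)
  define p where "p = closest_point Z zs"
  have pZ: "p \<in> Z" unfolding p_def using assms by (simp add: closest_point_in_set)
  have vi: "\<forall>y\<in>Z. inner (f p) (y - p) \<le> 0"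
  proof
    fix y assume y: "y \<in> Z"
    have fp: "f p = (1/K) *\<^sub>R (zs - p)" using F0 unfolding F_def antiwindup_field_def p_def by simp
    have "inner (zs - p) (y - p) \<le> 0" unfolding p_def using assms y by (intro closest_point_dot) auto
    then show "inner (f p) (y - p) \<le> 0" unfolding fp using assms(8)
      by (simp add: divide_nonpos_pos)
  qed
  have peq: "proj_equilibrium Z f p"
    unfolding proj_equilibrium_def using pZ vi proj_eq_iff[OF assms(2) pZ] by simp
  show ?thesis
  proof (intro exI[of _ zs] conjI allI impI)
    show "antiwindup_field Z f K zs = 0" using F0 by (simp add: F_def)
    fix z assume "antiwindup_field Z f K z = 0"
    then have "F z = 0" by (simp add: F_def)
    then have "0 \<le> - \<mu> * (norm (z - zs))\<^sup>2" using mono[of z zs] F0 by simp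
    then have "(norm (z - zs))\<^sup>2 \<le> 0" using mu by (simp add: mult_le_0_iff)
    then show "z = zs" by simp
  next
    fix x assume "is_trajectory (antiwindup_field Z f K) x"
    then show "(x \<longlongrightarrow> zs) at_top" using traj_conv[OF F0 mono mu] by (simp add: F_def)
  next
    show "proj_equilibrium Z f (closest_point Z zs)" using peq by (simp add: p_def)
  next
    fix z assume "proj_equilibrium Z f z"
    then have z: "z \<in> Z" "proj_field Z f z = 0" by (auto simp: proj_equilibrium_def)
    then have "\<forall>y\<in>Z. inner (f z) (y - z) \<le> 0" using proj_eq_iff[OF assms(2)] by blast
    then show "z = closest_point Z zs"
      using vi_unique[OF assms(6,4) z(1) _ pZ vi] by (simp add: p_def)
  qed
qed

end
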